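(* Let $I\ge 0$, $S\ge 1$ and $j$ be integers with $L(I,S)\le j\le\lfloor I/2\rfloor$, consider the pairing process described in the context, and fix a clean device $w_t$. Let $B$ be a set of $j$ bb-pairings that is the set of bb-pairings of some possible wiring. The number of possible wirings whose set of bb-pairings is exactly $B$ and in which $w_t$ is paired equals $S!$ if $(I,S,j)$ is in the dagger case, and equals $(I-2j)!\binom{S-1}{I-2j-1}$ otherwise, with the convention $\binom{A}{B}=0$ when $B<0$.
   Context: Pairing process: there are $I$ infected devices $b_1,\dots,b_I$ and $S$ clean devices $w_1,\dots,w_S$. For $t=1,\dots,I$ in this order: if $b_t$ is not yet paired and at least one device other than $b_t$ is not yet paired, then $b_t$ chooses one of the currently unpaired devices other than itself uniformly at random, independently of previous choices, and becomes paired with it; otherwise $b_t$ does nothing. Each device belongs to at most one pair. The wiring is the final set of pairs; a bb-pairing is a pair consisting of two infected devices; a wiring is possible if it occurs with positive probability. $L(I,S)=0$ if $I\le S$; $L(I,S)=\frac{I-S}{2}$ if $I>S$ and $I-S$ is even; $L(I,S)=\frac{I-S-1}{2}$ if $I>S$ and $I-S$ is odd. $(I,S,j)$ is in the dagger case if $I>S$, $I+S$ is odd and $j=\frac{I-S-1}{2}$. *)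

theory Defs
  imports Main
begin

text \<open>Devices: infected device b_i is Inl i (1 <= i <= I), clean device w_k is Inr k (1 <= k <= S).
A pair is a two-element set of devices; a wiring is a set of pairs.\<close>

type_synonym device = "nat + nat"

definition devices :: "nat \<Rightarrow> nat \<Rightarrow> device set" where
  "devices I S = Inl ` {1..I} \<union> Inr ` {1..S}"

definition unpaired :: "nat \<Rightarrow> nat \<Rightarrow> device set set \<Rightarrow> device set" where
  "unpaired I S P = devices I S - \<Union>P"

text \<open>reach I S t P: after infected devices b_1..b_t have acted, the current set of
pairs P occurs with positive probability (each uniform choice has positive probability).\<close>
inductive reach :: "nat \<Rightarrow> nat \<Rightarrow> nat \<Rightarrow> device set set \<Rightarrow> bool" for I S where
  start: "reach I S 0 {}"
| skip: "\<lbrakk> reach I S t P; t < I;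
           Inl (Suc t) \<notin> unpaired I S P \<or> \<not> (\<exists>d \<in> unpaired I S P. d \<noteq> Inl (Suc t)) \<rbrakk>
         \<Longrightarrow> reach I S (Suc t) P"
| choose: "\<lbrakk> reach I S t P; t < I; Inl (Suc t) \<in> unpaired I S P;
             d \<in> unpaired I S P; d \<noteq> Inl (Suc t) \<rbrakk>
         \<Longrightarrow> reach I S (Suc t) (insert {Inl (Suc t), d} P)"

definition possible_wiring :: "nat \<Rightarrow> nat \<Rightarrow> device set set \<Rightarrow> bool" where
  "possible_wiring I S W \<longleftrightarrow> reach I S I W"

definition bb_pairings :: "device set set \<Rightarrow> device set set" where
  "bb_pairings W = {p \<in> W. p \<subseteq> range Inl}"

definition L :: "nat \<Rightarrow> nat \<Rightarrow> nat" where
  "L I S = (if I \<le> S then 0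
            else if even (I - S) then (I - S) div 2 else (I - S - 1) div 2)"

definition dagger :: "nat \<Rightarrow> nat \<Rightarrow> nat \<Rightarrow> bool" where
  "dagger I S j \<longleftrightarrow> I > S \<and> odd (I + S) \<and> j = (I - S - 1) div 2"

definition binom_int :: "nat \<Rightarrow> int \<Rightarrow> nat" where
  "binom_int A B = (if B < 0 then 0 else A choose (nat B))"

end

theory Submission
  imports Defs "HOL-Library.FuncSet"
begin


definition charP :: "nat \<Rightarrow> nat \<Rightarrow> nat \<Rightarrow> device set set \<Rightarrow> bool" where
 "charP I S t P \<longleftrightarrow> t \<le> I \<and>
   (\<forall>p\<in>P. \<exists>a d. p = {Inl a, d} \<and> a \<in> {1..t} \<and> d \<in> devices I S \<and> (\<forall>c. d = Inl c \<longrightarrow> a < c)) \<and>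
   (\<forall>p\<in>P. \<forall>q\<in>P. p \<inter> q \<noteq> {} \<longrightarrow> p = q) \<and>
   (\<forall>i\<in>{1..t}. Inl i \<notin> \<Union>P \<longrightarrow>
      (\<forall>d\<in>devices I S - {Inl i}. \<exists>p\<in>P. d \<in> p \<and> (\<exists>a<i. Inl a \<in> p)))"

lemma Inl_dev[simp]: "Inl a \<in> devices I S \<longleftrightarrow> a \<in> {1..I}"
  by (auto simp: devices_def)
lemma Inr_dev[simp]: "Inr a \<in> devices I S \<longleftrightarrow> a \<in> {1..S}"
  by (auto simp: devices_def)

lemma charP_D:
  assumes "charP I S t P"
  shows charP_le: "t \<le> I"
   and charP_pair: "\<And>p. p \<in> P \<Longrightarrow> \<exists>a d. p = {Inl a, d} \<and> a \<in> {1..t} \<and> d \<in> devices I S \<and> (\<forall>c. d = Inl c \<longrightarrow> a < c)"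
   and charP_dis: "\<And>p q. p \<in> P \<Longrightarrow> q \<in> P \<Longrightarrow> p \<inter> q \<noteq> {} \<Longrightarrow> p = q"
   and charP_cov: "\<And>i e. i \<in> {1..t} \<Longrightarrow> Inl i \<notin> \<Union>P \<Longrightarrow> e \<in> devices I S \<Longrightarrow> e \<noteq> Inl i \<Longrightarrow> \<exists>p\<in>P. e \<in> p \<and> (\<exists>a<i. Inl a \<in> p)"
  using assms unfolding charP_def by blast+

lemma reach_charP: "reach I S t P \<Longrightarrow> charP I S t P"
proof (induction rule: reach.induct)
  case start
  then show ?case by (simp add: charP_def)
next
  case (skip t P)
  from skip.IH have c: "charP I S t P" .
  show ?case unfolding charP_def
  proof (intro conjI)
    show "Suc t \<le> I" using skip by simp
    show "\<forall>p\<in>P. \<exists>a d. p = {Inl a, d} \<and> a \<in> {1..Suc t} \<and> d \<in> devices I S \<and> (\<forall>c. d = Inl c \<longrightarrow> a < c)"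
    proof
      fix p assume "p \<in> P"
      from charP_pair[OF c this] obtain a d where "p = {Inl a, d}" "a \<in> {1..t}" "d \<in> devices I S" "\<forall>c. d = Inl c \<longrightarrow> a < c" by blast
      then show "\<exists>a d. p = {Inl a, d} \<and> a \<in> {1..Suc t} \<and> d \<in> devices I S \<and> (\<forall>c. d = Inl c \<longrightarrow> a < c)"
        by (intro exI[where x=a] exI[where x=d]) auto
    qed
    show "\<forall>p\<in>P. \<forall>q\<in>P. p \<inter> q \<noteq> {} \<longrightarrow> p = q" using charP_dis[OF c] by blast
    show "\<forall>i\<in>{1..Suc t}. Inl i \<notin> \<Union>P \<longrightarrow>
      (\<forall>d\<in>devices I S - {Inl i}. \<exists>p\<in>P. d \<in> p \<and> (\<exists>a<i. Inl a \<in> p))"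
    proof (intro ballI impI)
      fix i d assume i: "i \<in> {1..Suc t}" and ni: "Inl i \<notin> \<Union>P" and d: "d \<in> devices I S - {Inl i}"
      show "\<exists>p\<in>P. d \<in> p \<and> (\<exists>a<i. Inl a \<in> p)"
      proof (cases "i = Suc t")
        case False
        then have "i \<in> {1..t}" using i by auto
        then show ?thesis using charP_cov[OF c _ ni] d by blast
      next
        case True
        have "Inl (Suc t) \<in> unpaired I S P" using ni True skip.hyps(2) by (auto simp: unpaired_def)
        with skip.hyps(3) have "d \<in> \<Union>P" using d True by (auto simp: unpaired_def)
        then obtain p where p: "p \<in> P" "d \<in> p" by blast
        then obtain a d' where "p = {Inl a, d'}" "a \<in> {1..t}" using charP_pair[OF c p(1)] by blast
        then have "Inl a \<in> p" "a < i" using True by auto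
        then show ?thesis using p by blast
      qed
    qed
  qed
next
  case (choose t P d)
  from choose.IH have c: "charP I S t P" .
  have dd: "d \<in> devices I S" "d \<notin> \<Union>P" and bd: "Inl (Suc t) \<notin> \<Union>P"
    using choose.hyps(3,4) by (auto simp: unpaired_def)
  have dc: "\<forall>c. d = Inl c \<longrightarrow> Suc t < c"
  proof (intro allI impI)
    fix c assume dc: "d = Inl c"
    have c1: "c \<in> {1..I}" using dd dc by simp
    show "Suc t < c"
    proof (rule ccontr)
      assume "\<not> Suc t < c"
      then have "c \<in> {1..t}" using c1 choose.hyps(5) dc by auto
      have nc: "Inl c \<notin> \<Union>P" using dd dc by simp
      have "\<forall>e\<in>devices I S - {Inl c}. \<exists>p\<in>P. e \<in> p" using charP_cov[OF c \<open>c \<in> {1..t}\<close> nc] by blast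
      moreover have "Inl (Suc t) \<in> devices I S - {Inl c}" using choose.hyps(2,5) dc by auto
      ultimately show False using bd by blast
    qed
  qed
  show ?case unfolding charP_def
  proof (intro conjI)
    show "Suc t \<le> I" using choose by simp
    show "\<forall>p\<in>insert {Inl (Suc t), d} P. \<exists>a d. p = {Inl a, d} \<and> a \<in> {1..Suc t} \<and> d \<in> devices I S \<and> (\<forall>c. d = Inl c \<longrightarrow> a < c)"
    proof
      fix p assume p: "p \<in> insert {Inl (Suc t), d} P"
      show "\<exists>a d. p = {Inl a, d} \<and> a \<in> {1..Suc t} \<and> d \<in> devices I S \<and> (\<forall>c. d = Inl c \<longrightarrow> a < c)"
      proof (cases "p \<in> P")
        case True
        from charP_pair[OF c this] obtain a d where "p = {Inl a, d}" "a \<in> {1..t}" "d \<in> devices I S" "\<forall>c. d = Inl c \<longrightarrow> a < c" by blast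
        then show ?thesis by (intro exI[where x=a] exI[where x=d]) auto
      next
        case False then have "p = {Inl (Suc t), d}" using p by simp
        then show ?thesis using dd dc by (intro exI[where x="Suc t"] exI[where x=d]) auto
      qed
    qed
    show "\<forall>p\<in>insert {Inl (Suc t), d} P. \<forall>q\<in>insert {Inl (Suc t), d} P. p \<inter> q \<noteq> {} \<longrightarrow> p = q"
    proof (intro ballI impI)
      fix p q assume p: "p \<in> insert {Inl (Suc t), d} P" and q: "q \<in> insert {Inl (Suc t), d} P" and pq: "p \<inter> q \<noteq> {}"
      have "\<forall>r\<in>P. r \<inter> {Inl (Suc t), d} = {}" using dd bd by blast
      then show "p = q" using p q pq charP_dis[OF c] by blast
    qed
    show "\<forall>i\<in>{1..Suc t}. Inl i \<notin> \<Union>(insert {Inl (Suc t), d} P) \<longrightarrow>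
      (\<forall>e\<in>devices I S - {Inl i}. \<exists>p\<in>insert {Inl (Suc t), d} P. e \<in> p \<and> (\<exists>a<i. Inl a \<in> p))"
    proof (intro ballI impI)
      fix i e assume i: "i \<in> {1..Suc t}" and ni: "Inl i \<notin> \<Union>(insert {Inl (Suc t), d} P)" and e: "e \<in> devices I S - {Inl i}"
      have "i \<noteq> Suc t" using ni by auto
      then have "i \<in> {1..t}" using i by auto
      then show "\<exists>p\<in>insert {Inl (Suc t), d} P. e \<in> p \<and> (\<exists>a<i. Inl a \<in> p)" using charP_cov[OF c _ _ ] ni e by auto
    qed
  qed
qed

lemma charP_reach: "charP I S t P \<Longrightarrow> reach I S t P"
proof (induction t arbitrary: P)
  case 0
  have "P = {}"
  proof (rule ccontr)
    assume "P \<noteq> {}" then obtain p where "p \<in> P" by blast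
    from charP_pair[OF 0 this] show False by auto
  qed
  then show ?case by (simp add: reach.start)
next
  case (Suc t)
  have c: "charP I S (Suc t) P" by fact
  have tI: "t < I" using charP_le[OF c] by simp
  show ?case
  proof (cases "\<exists>d. {Inl (Suc t), d} \<in> P \<and> d \<in> devices I S \<and> (\<forall>c. d = Inl c \<longrightarrow> Suc t < c)")
    case True
    then obtain d where d: "{Inl (Suc t), d} \<in> P" "d \<in> devices I S" "\<forall>c. d = Inl c \<longrightarrow> Suc t < c" by blast
    define p where "p = {Inl (Suc t), d}"
    define P' where "P' = P - {p}"
    have dis: "\<forall>p\<in>P. \<forall>q\<in>P. p \<inter> q \<noteq> {} \<longrightarrow> p = q" using charP_dis[OF c] by blast
    have pP: "p \<in> P" using d(1) p_def by simp
    have nq: False if "q \<in> P'" "x \<in> p" "x \<in> q" for q x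
    proof -
      have "q \<in> P" "q \<noteq> p" using that(1) P'_def by auto
      moreover have "p \<inter> q \<noteq> {}" using that by blast
      ultimately show False using charP_dis[OF c pP] by blast
    qed
    have notin: "Inl (Suc t) \<notin> \<Union>P'" "d \<notin> \<Union>P'" using nq unfolding p_def by blast+
    have c': "charP I S t P'" unfolding charP_def
    proof (intro conjI)
      show "t \<le> I" using tI by simp
      show "\<forall>p\<in>P'. \<exists>a d. p = {Inl a, d} \<and> a \<in> {1..t} \<and> d \<in> devices I S \<and> (\<forall>c. d = Inl c \<longrightarrow> a < c)"
      proof
        fix q assume q: "q \<in> P'"
        then obtain a e where ae: "q = {Inl a, e}" "a \<in> {1..Suc t}" "e \<in> devices I S" "\<forall>c. e = Inl c \<longrightarrow> a < c"
          using charP_pair[OF c] q unfolding P'_def by blast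
        have "a \<noteq> Suc t" using ae q notin by auto
        then show "\<exists>a d. q = {Inl a, d} \<and> a \<in> {1..t} \<and> d \<in> devices I S \<and> (\<forall>c. d = Inl c \<longrightarrow> a < c)"
          using ae by (intro exI[where x=a] exI[where x=e]) auto
      qed
      show "\<forall>p\<in>P'. \<forall>q\<in>P'. p \<inter> q \<noteq> {} \<longrightarrow> p = q" using dis unfolding P'_def by blast
      show "\<forall>i\<in>{1..t}. Inl i \<notin> \<Union>P' \<longrightarrow>
          (\<forall>e\<in>devices I S - {Inl i}. \<exists>p\<in>P'. e \<in> p \<and> (\<exists>a<i. Inl a \<in> p))"
      proof (intro ballI impI)
        fix i e assume i: "i \<in> {1..t}" and ni: "Inl i \<notin> \<Union>P'" and e: "e \<in> devices I S - {Inl i}"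
        have "Inl i \<notin> p" using i d(3) unfolding p_def by auto
        then have "Inl i \<notin> \<Union>P" using ni unfolding P'_def by blast
        have i2: "i \<in> {1..Suc t}" using i by auto
        have "\<exists>q\<in>P. e \<in> q \<and> (\<exists>a<i. Inl a \<in> q)" using charP_cov[OF c i2 \<open>Inl i \<notin> \<Union>P\<close>, of e] e by blast
        then obtain q where q: "q \<in> P" "e \<in> q" "\<exists>a<i. Inl a \<in> q" by blast
        have "q \<noteq> p" using q(3) i d(3) unfolding p_def by auto
        then show "\<exists>p\<in>P'. e \<in> p \<and> (\<exists>a<i. Inl a \<in> p)" using q unfolding P'_def by blast
      qed
    qed
    have r: "reach I S t P'" using Suc.IH c' by blast
    have "reach I S (Suc t) (insert {Inl (Suc t), d} P')"
      apply (rule reach.choose[OF r tI])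
      using notin d tI by (auto simp: unpaired_def)
    moreover have "insert {Inl (Suc t), d} P' = P" using d unfolding P'_def p_def by blast
    ultimately show ?thesis by simp
  next
    case False
    have c': "charP I S t P" unfolding charP_def
    proof (intro conjI)
      show "t \<le> I" using tI by simp
      show "\<forall>p\<in>P. \<exists>a d. p = {Inl a, d} \<and> a \<in> {1..t} \<and> d \<in> devices I S \<and> (\<forall>c. d = Inl c \<longrightarrow> a < c)"
      proof
        fix q assume q: "q \<in> P"
        then obtain a e where ae: "q = {Inl a, e}" "a \<in> {1..Suc t}" "e \<in> devices I S" "\<forall>c. e = Inl c \<longrightarrow> a < c"
          using charP_pair[OF c q] by blast
        have "a \<noteq> Suc t" using ae q False by auto
        then show "\<exists>a d. q = {Inl a, d} \<and> a \<in> {1..t} \<and> d \<in> devices I S \<and> (\<forall>c. d = Inl c \<longrightarrow> a < c)"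
          using ae by (intro exI[where x=a] exI[where x=e]) auto
      qed
      show "\<forall>p\<in>P. \<forall>q\<in>P. p \<inter> q \<noteq> {} \<longrightarrow> p = q" using charP_dis[OF c] by blast
      show "\<forall>i\<in>{1..t}. Inl i \<notin> \<Union>P \<longrightarrow>
          (\<forall>e\<in>devices I S - {Inl i}. \<exists>p\<in>P. e \<in> p \<and> (\<exists>a<i. Inl a \<in> p))"
        using charP_cov[OF c] by auto
    qed
    have r: "reach I S t P" using Suc.IH c' by blast
    show ?thesis
    proof (rule reach.skip[OF r tI])
      show "Inl (Suc t) \<notin> unpaired I S P \<or> \<not> (\<exists>d\<in>unpaired I S P. d \<noteq> Inl (Suc t))"
      proof (cases "Inl (Suc t) \<in> \<Union>P")
        case True then show ?thesis by (auto simp: unpaired_def)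
      next
        case nb: False
        have "Suc t \<in> {1..Suc t}" by simp
        then have "\<forall>e\<in>devices I S - {Inl (Suc t)}. \<exists>p\<in>P. e \<in> p" using charP_cov[OF c \<open>Suc t \<in> {1..Suc t}\<close> nb] by blast
        then show ?thesis by (auto simp: unpaired_def)
      qed
    qed
  qed
qed

lemma possible_iff: "possible_wiring I S W \<longleftrightarrow> charP I S I W"
  unfolding possible_wiring_def using reach_charP charP_reach by blast



lemma Q_eq: "prod ((-) n) {0..<m} = fact m * (n choose m)"
proof (induction m)
  case 0 then show ?case by simp
next
  case (Suc m)
  have "prod ((-) n) {0..<Suc m} = prod ((-) n) {0..<m} * (n - m)" by simp
  also have "\<dots> = fact m * ((n choose m) * (n - m))" using Suc by simp
  also have "(n choose m) * (n - m) = (n choose Suc m) * Suc m"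
    by (metis binomial_absorb_comp binomial_absorption mult.commute)
  finally show ?case by (simp add: algebra_simps)
qed

lemma Q_diff:
  assumes "n \<ge> 1"
  shows "prod ((-) n) {0..<m} - prod ((-) (n - 1)) {0..<m} = fact m * binom_int (n - 1) (int m - 1)"
proof (cases m)
  case 0 then show ?thesis by (simp add: binom_int_def)
next
  case (Suc m')
  obtain k where n: "n = Suc k" using assms by (cases n) auto
  have "prod ((-) n) {0..<m} - prod ((-) (n - 1)) {0..<m} = fact m * (Suc k choose Suc m') - fact m * (k choose Suc m')"
    unfolding Q_eq n Suc by simp
  also have "\<dots> = fact m * (k choose m')" by (simp add: algebra_simps)
  finally show ?thesis unfolding binom_int_def n Suc by simp
qed

lemma count_inj:
  fixes A :: "nat set"
  assumes "finite A" "t \<in> {1..S}"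
  shows "card {f \<in> A \<rightarrow>\<^sub>E {1..S}. inj_on f A \<and> t \<in> f ` A} = fact (card A) * binom_int (S - 1) (int (card A) - 1)"
proof -
  define A1 where "A1 = {f \<in> A \<rightarrow>\<^sub>E {1..S}. inj_on f A}"
  define A2 where "A2 = {f \<in> A \<rightarrow>\<^sub>E ({1..S} - {t}). inj_on f A}"
  have eq: "{f \<in> A \<rightarrow>\<^sub>E {1..S}. inj_on f A \<and> t \<in> f ` A} = A1 - A2"
    unfolding A1_def A2_def by (auto simp: PiE_iff)
  have sub: "A2 \<subseteq> A1" unfolding A1_def A2_def by (auto simp: PiE_iff)
  have fin: "finite A1" unfolding A1_def using assms(1) by (intro finite_subset[OF _ finite_PiE[of A "\<lambda>_. {1..S}"]]) auto
  have c1: "card A1 = prod ((-) S) {0..<card A}"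
    unfolding A1_def using card_inj_on_subset_funcset[of A "{1..S}" A] assms by simp
  have c2: "card A2 = prod ((-) (S - 1)) {0..<card A}"
    unfolding A2_def using card_inj_on_subset_funcset[of A "{1..S} - {t}" A] assms by simp
  have "card (A1 - A2) = card A1 - card A2"
    using sub fin by (meson card_Diff_subset finite_subset)
  then show ?thesis using eq c1 c2 Q_diff[of S "card A"] assms by simp
qed



definition Bi :: "device set set \<Rightarrow> nat set" where "Bi B = {i. Inl i \<in> \<Union>B}"
definition RR :: "nat \<Rightarrow> device set set \<Rightarrow> nat set" where "RR I B = {1..I} - Bi B"
definition Yset :: "nat \<Rightarrow> device set set \<Rightarrow> nat set" where "Yset I W = {i\<in>{1..I}. Inl i \<notin> \<Union>W}"
definition phi :: "device set set \<Rightarrow> nat \<Rightarrow> nat" where "phi W i = (THE k. {Inl i, Inr k} \<in> W)"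

lemma dagger_iff: assumes "2 * j \<le> I" shows "dagger I S j \<longleftrightarrow> I - 2 * j = S + 1"
proof
  assume d: "dagger I S j"
  then have "odd (I + S)" "I > S" "j = (I - S - 1) div 2" unfolding dagger_def by auto
  then obtain k where k: "I + S = 2 * k + 1" by (meson oddE)
  then have "I - S - 1 = 2 * (k - S)" by arith
  then have "(I - S - 1) div 2 = k - S" by simp
  then show "I - 2 * j = S + 1" using \<open>j = _\<close> k \<open>I > S\<close> by arith
next
  assume "I - 2 * j = S + 1"
  then have I: "I = S + 1 + 2 * j" using assms by arith
  show "dagger I S j" unfolding dagger_def I by simp
qed

lemma finite_devices: "finite (devices I S)" by (simp add: devices_def)

locale wir =
  fixes I S :: nat and W B :: "device set set"
  assumes c: "charP I S I W" and bb: "bb_pairings W = B"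
begin

lemma B_sub: "B \<subseteq> W" using bb unfolding bb_pairings_def by auto

lemma B_Inl: "q \<in> B \<Longrightarrow> q \<subseteq> range Inl" using bb unfolding bb_pairings_def by auto

lemma finW: "finite W"
proof -
  have "W \<subseteq> Pow (devices I S)"
  proof
    fix q assume "q \<in> W"
    from charP_pair[OF c this] obtain a d where "q = {Inl a, d}" "a \<in> {1..I}" "d \<in> devices I S" by blast
    then show "q \<in> Pow (devices I S)" by auto
  qed
  then show ?thesis using finite_devices finite_subset by blast
qed

lemma finB: "finite B" using finW B_sub finite_subset by blast

lemma pairB: assumes "q \<in> B" shows "\<exists>a c. q = {Inl a, Inl c} \<and> a \<in> {1..I} \<and> c \<in> {1..I} \<and> a < c"
proof -
  have "q \<in> W" using assms B_sub by blast
  from charP_pair[OF c this] obtain a d where ad: "q = {Inl a, d}" "a \<in> {1..I}" "d \<in> devices I S" "\<forall>c. d = Inl c \<longrightarrow> a < c" by blast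
  have "d \<in> range Inl" using B_Inl[OF assms] ad(1) by auto
  then obtain c where "d = Inl c" by blast
  then show ?thesis using ad by (intro exI[where x=a] exI[where x=c]) auto
qed

lemma pairN: assumes "q \<in> W" "q \<notin> B" shows "\<exists>a k. q = {Inl a, Inr k} \<and> a \<in> {1..I} \<and> k \<in> {1..S}"
proof -
  from charP_pair[OF c assms(1)] obtain a d where ad: "q = {Inl a, d}" "a \<in> {1..I}" "d \<in> devices I S" by blast
  have "\<not> q \<subseteq> range Inl" using assms bb unfolding bb_pairings_def by auto
  then have "d \<notin> range Inl" using ad by auto
  then obtain k where "d = Inr k" by (cases d) auto
  then show ?thesis using ad by auto
qed

lemma dis: "p \<in> W \<Longrightarrow> q \<in> W \<Longrightarrow> x \<in> p \<Longrightarrow> x \<in> q \<Longrightarrow> p = q"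
  using charP_dis[OF c, of p q] by blast

lemma UB: "\<Union>B = Inl ` Bi B"
proof
  show "\<Union>B \<subseteq> Inl ` Bi B"
  proof
    fix x assume "x \<in> \<Union>B"
    then obtain q where q: "q \<in> B" "x \<in> q" by blast
    then obtain i where "x = Inl i" using B_Inl by blast
    then show "x \<in> Inl ` Bi B" using q unfolding Bi_def by blast
  qed
  show "Inl ` Bi B \<subseteq> \<Union>B" unfolding Bi_def by blast
qed

lemma BiI: "Bi B \<subseteq> {1..I}"
proof
  fix i assume "i \<in> Bi B"
  then obtain q where q: "q \<in> B" "Inl i \<in> q" unfolding Bi_def by blast
  from pairB[OF q(1)] obtain a c where "q = {Inl a, Inl c}" "a \<in> {1..I}" "c \<in> {1..I}" by blast
  then show "i \<in> {1..I}" using q(2) by auto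
qed

lemma cardBi: "card (Bi B) = 2 * card B"
proof -
  have pw: "pairwise disjnt B"
    unfolding pairwise_def disjnt_def using dis B_sub by blast
  have fq: "\<And>q. q \<in> B \<Longrightarrow> finite q"
  proof -
    fix q assume "q \<in> B"
    from pairB[OF this] show "finite q" by auto
  qed
  have "card (\<Union>B) = sum card B" using card_Union_disjoint[OF pw fq] by blast
  also have "\<dots> = sum (\<lambda>_. 2) B"
  proof (rule sum.cong)
    fix q assume "q \<in> B"
    from pairB[OF this] show "card q = 2" by auto
  qed simp
  also have "\<dots> = 2 * card B" by simp
  finally have "card (\<Union>B) = 2 * card B" .
  moreover have "card (\<Union>B) = card (Bi B)" unfolding UB by (simp add: card_image)
  ultimately show ?thesis by simp
qed

lemma cardR: "card (RR I B) = I - 2 * card B" "2 * card B \<le> I"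
proof -
  have "card (Bi B) \<le> card {1..I}" using card_mono[OF finite_atLeastAtMost BiI] .
  then show "2 * card B \<le> I" using cardBi by simp
  show "card (RR I B) = I - 2 * card B" unfolding RR_def
    using card_Diff_subset[OF finite_subset[OF BiI] BiI] cardBi by simp
qed

lemma finR: "finite (RR I B)" unfolding RR_def by simp

lemma Y_R: "Yset I W \<subseteq> RR I B"
  unfolding Yset_def RR_def Bi_def using B_sub by blast

lemma Y_le1: assumes "i \<in> Yset I W" "i' \<in> Yset I W" shows "i = i'"
proof (rule ccontr)
  assume ne: "i \<noteq> i'"
  have i: "i \<in> {1..I}" "Inl i \<notin> \<Union>W" "Inl i' \<in> devices I S" using assms unfolding Yset_def by auto
  from charP_cov[OF c i(1,2) i(3)] ne have "Inl i' \<in> \<Union>W" by auto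
  then show False using assms(2) unfolding Yset_def by auto
qed

lemma phi: assumes "i \<in> RR I B - Yset I W"
  shows "{Inl i, Inr (phi W i)} \<in> W" "phi W i \<in> {1..S}" "\<And>k. {Inl i, Inr k} \<in> W \<Longrightarrow> k = phi W i"
proof -
  have i: "i \<in> {1..I}" "i \<notin> Bi B" "Inl i \<in> \<Union>W" using assms unfolding RR_def Yset_def by auto
  then obtain q where q: "q \<in> W" "Inl i \<in> q" by blast
  have "q \<notin> B" using q i(2) unfolding Bi_def by blast
  from pairN[OF q(1) this] obtain a k where ak: "q = {Inl a, Inr k}" "k \<in> {1..S}" by blast
  have "a = i" using ak q by auto
  have uniq: "k' = k" if "{Inl i, Inr k'} \<in> W" for k'
  proof -
    have "{Inl i, Inr k'} = q" using dis[OF that q(1), of "Inl i"] q by simp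
    then show ?thesis using ak \<open>a = i\<close> by (auto simp: doubleton_eq_iff)
  qed
  have qk: "{Inl i, Inr k} \<in> W" using ak q \<open>a = i\<close> by simp
  have "phi W i = k" unfolding phi_def using qk uniq by (rule the_equality)
  then show "{Inl i, Inr (phi W i)} \<in> W" using qk by simp
  show "phi W i \<in> {1..S}" using ak(2) \<open>phi W i = k\<close> by simp
  show "\<And>k'. {Inl i, Inr k'} \<in> W \<Longrightarrow> k' = phi W i" using uniq \<open>phi W i = k\<close> by simp
qed

lemma W_eq: "W = B \<union> (\<lambda>i. {Inl i, Inr (phi W i)}) ` (RR I B - Yset I W)"
proof
  show "B \<union> (\<lambda>i. {Inl i, Inr (phi W i)}) ` (RR I B - Yset I W) \<subseteq> W"
    using B_sub phi(1) by blast
  show "W \<subseteq> B \<union> (\<lambda>i. {Inl i, Inr (phi W i)}) ` (RR I B - Yset I W)"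
  proof
    fix q assume q: "q \<in> W"
    show "q \<in> B \<union> (\<lambda>i. {Inl i, Inr (phi W i)}) ` (RR I B - Yset I W)"
    proof (cases "q \<in> B")
      case False
      from pairN[OF q False] obtain a k where ak: "q = {Inl a, Inr k}" "a \<in> {1..I}" "k \<in> {1..S}" by blast
      have "a \<notin> Bi B"
      proof
        assume "a \<in> Bi B"
        then obtain q' where "q' \<in> B" "Inl a \<in> q'" unfolding Bi_def by blast
        then have "q' = q" using dis[of q' q "Inl a"] B_sub q ak by auto
        then show False using False \<open>q' \<in> B\<close> by simp
      qed
      moreover have "a \<notin> Yset I W" using q ak unfolding Yset_def by auto
      ultimately have aR: "a \<in> RR I B - Yset I W" using ak unfolding RR_def by auto
      have "k = phi W a" using phi(3)[OF aR] q ak by simp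
      then show ?thesis using ak aR by blast
    qed simp
  qed
qed

lemma phi_inj: "inj_on (phi W) (RR I B - Yset I W)"
proof (rule inj_onI)
  fix i i' assume i: "i \<in> RR I B - Yset I W" and i': "i' \<in> RR I B - Yset I W" and e: "phi W i = phi W i'"
  have "{Inl i, Inr (phi W i)} = {Inl i', Inr (phi W i')}"
    using dis[OF phi(1)[OF i] phi(1)[OF i'], of "Inr (phi W i)"] e by simp
  then show "i = i'" by (auto simp: doubleton_eq_iff)
qed

lemma Inr_iff: "Inr t \<in> \<Union>W \<longleftrightarrow> t \<in> phi W ` (RR I B - Yset I W)"
proof -
  have "Inr t \<notin> \<Union>B" unfolding UB by auto
  then show ?thesis by (subst W_eq) auto
qed

lemma Y_cases:
  assumes y: "y \<in> Yset I W"
  shows "phi W ` (RR I B - Yset I W) = {1..S}" "\<And>i. i \<in> RR I B - {y} \<Longrightarrow> i < y"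
    "\<And>q. q \<in> B \<Longrightarrow> \<exists>a<y. Inl a \<in> q"
proof -
  have Y: "Yset I W = {y}" using Y_le1 y by blast
  have yy: "y \<in> {1..I}" "Inl y \<notin> \<Union>W" using y unfolding Yset_def by auto
  show "phi W ` (RR I B - Yset I W) = {1..S}"
  proof
    show "phi W ` (RR I B - Yset I W) \<subseteq> {1..S}" using phi(2) by blast
    show "{1..S} \<subseteq> phi W ` (RR I B - Yset I W)"
    proof
      fix k assume k: "k \<in> {1..S}"
      have "Inr k \<in> devices I S" "Inr k \<noteq> Inl y" using k by auto
      from charP_cov[OF c yy this] have "Inr k \<in> \<Union>W" by blast
      then show "k \<in> phi W ` (RR I B - Yset I W)" using Inr_iff by blast
    qed
  qed
  show "\<And>i. i \<in> RR I B - {y} \<Longrightarrow> i < y"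
  proof -
    fix i assume i: "i \<in> RR I B - {y}"
    have iR: "i \<in> RR I B - Yset I W" using i Y by blast
    have "Inl i \<in> devices I S" "Inl i \<noteq> Inl y" using i unfolding RR_def by auto
    from charP_cov[OF c yy this] obtain q a where q: "q \<in> W" "Inl i \<in> q" "a < y" "Inl a \<in> q" by blast
    have "q = {Inl i, Inr (phi W i)}" using dis[OF q(1) phi(1)[OF iR] q(2)] by simp
    then have "a = i" using q(4) by auto
    then show "i < y" using q(3) by simp
  qed
  show "\<And>q. q \<in> B \<Longrightarrow> \<exists>a<y. Inl a \<in> q"
  proof -
    fix q assume q: "q \<in> B"
    from pairB[OF q] obtain a c' where ac: "q = {Inl a, Inl c'}" "a \<in> {1..I}" by blast
    have "a \<in> Bi B" using q ac unfolding Bi_def by blast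
    then have "a \<noteq> y" using y Y_R unfolding RR_def by blast
    then have "Inl a \<in> devices I S" "Inl a \<noteq> Inl y" using ac by auto
    from charP_cov[OF c yy this] obtain q' a' where q': "q' \<in> W" "Inl a \<in> q'" "a' < y" "Inl a' \<in> q'" by blast
    have "q' = q" using dis[OF q'(1) _ q'(2), of q] B_sub q ac by auto
    then show "\<exists>a<y. Inl a \<in> q" using q' by blast
  qed
qed

lemma Ydet: "Yset I W = (if dagger I S (card B) then {Max (RR I B)} else {})"
proof (cases "Yset I W = {}")
  case True
  have sub: "phi W ` (RR I B - Yset I W) \<subseteq> {1..S}" using phi(2) by blast
  have "card (RR I B - Yset I W) \<le> card {1..S}" using card_inj_on_le[OF phi_inj sub] by simp
  then have "card (RR I B) \<le> card {1..S}" using True by simp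
  then have "I - 2 * card B \<le> S" using cardR by simp
  then have "\<not> dagger I S (card B)" using dagger_iff[OF cardR(2)] by simp
  then show ?thesis using True by simp
next
  case False
  then obtain y where y: "y \<in> Yset I W" by blast
  have Y: "Yset I W = {y}" using Y_le1 y by blast
  have yR: "y \<in> RR I B" using y Y_R by blast
  have "card (RR I B - Yset I W) = S"
    using card_image[OF phi_inj] Y_cases(1)[OF y] by simp
  then have "card (RR I B - {y}) = S" using Y by simp
  then have "card (RR I B) = S + 1" using yR finR
  proof -
    have "card (RR I B) > 0" using yR finR card_gt_0_iff by blast
    then show ?thesis using \<open>card (RR I B - {y}) = S\<close> yR finR by (simp add: card_Diff_singleton_if)
  qed
  then have "I - 2 * card B = S + 1" using cardR by simp
  then have d: "dagger I S (card B)" using dagger_iff[OF cardR(2)] by simp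
  have "Max (RR I B) = y"
  proof (rule Max_eqI[OF finR])
    fix i assume "i \<in> RR I B" then show "i \<le> y" using Y_cases(2)[OF y, of i] by (cases "i = y") auto
  qed (rule yR)
  then show ?thesis using d Y by simp
qed

end


theorem lemma5:
  fixes I S j t :: nat and B :: "device set set"
  assumes "S \<ge> 1"
    and "L I S \<le> j" and "j \<le> I div 2"
    and "t \<in> {1..S}"
    and "card B = j"
    and "\<exists>W. possible_wiring I S W \<and> bb_pairings W = B"
  shows "card {W. possible_wiring I S W \<and> bb_pairings W = B \<and> Inr t \<in> \<Union>W} =
    (if dagger I S j then fact S
     else fact (I - 2 * j) * binom_int (S - 1) (int I - 2 * int j - 1))"
proof -
  obtain W0 where W0: "possible_wiring I S W0" "bb_pairings W0 = B" using assms(6) by blast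
  interpret w0: wir I S W0 B using W0 possible_iff by unfold_locales auto
  define dg where "dg = dagger I S j"
  define R where "R = RR I B"
  define R' where "R' = R - (if dg then {Max R} else {})"
  define G where "G f = B \<union> (\<lambda>i. {Inl i, Inr (f i)}) ` R'" for f :: "nat \<Rightarrow> nat"
  define D where "D = {f \<in> R' \<rightarrow>\<^sub>E {1..S}. inj_on f R' \<and> t \<in> f ` R'}"
  define T where "T = {W. possible_wiring I S W \<and> bb_pairings W = B \<and> Inr t \<in> \<Union>W}"
  have finR: "finite R" unfolding R_def using w0.finR .
  have cR: "card R = I - 2 * j" "2 * j \<le> I" using w0.cardR assms(5) unfolding R_def by auto
  have Y0: "Yset I W0 = (if dg then {Max R} else {})" using w0.Ydet assms(5) unfolding dg_def R_def by simp
  have RI: "R \<subseteq> {1..I}" unfolding R_def RR_def by auto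
  have cR': "card R' = (if dg then S else I - 2 * j)"
  proof (cases dg)
    case True
    then have "card R = S + 1" using cR dagger_iff[OF cR(2)] unfolding dg_def by simp
    then have "R \<noteq> {}" by auto
    then have "Max R \<in> R" using finR by simp
    then show ?thesis using True \<open>card R = S + 1\<close> finR unfolding R'_def by simp
  next
    case False then show ?thesis using cR unfolding R'_def by simp
  qed
  have sub1: "T \<subseteq> G ` D"
  proof
    fix W assume "W \<in> T"
    then have W: "possible_wiring I S W" "bb_pairings W = B" "Inr t \<in> \<Union>W" unfolding T_def by auto
    interpret w: wir I S W B using W possible_iff by unfold_locales auto
    have RY: "RR I B - Yset I W = R'" using w.Ydet assms(5) unfolding dg_def R_def R'_def by simp
    define f where "f = restrict (phi W) R'"
    have "f \<in> D" unfolding D_def f_def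
      using w.phi(2) w.phi_inj w.Inr_iff W(3) RY by auto
    moreover have "G f = W"
      unfolding G_def f_def using w.W_eq RY by auto
    ultimately show "W \<in> G ` D" by blast
  qed
  have sub2: "G ` D \<subseteq> T"
  proof
    fix W assume "W \<in> G ` D"
    then obtain f where f: "f \<in> D" and Wf: "W = G f" by blast
    have fS: "\<And>i. i \<in> R' \<Longrightarrow> f i \<in> {1..S}" and finj: "inj_on f R'" and ft: "t \<in> f ` R'"
      using f unfolding D_def by auto
    have R'R: "R' \<subseteq> R" unfolding R'_def by auto
    have R'B: "\<And>i. i \<in> R' \<Longrightarrow> i \<notin> Bi B" using R'R unfolding R_def RR_def by auto
    have UB: "\<Union>B = Inl ` Bi B" by (rule w0.UB)
    have newnB: "\<And>i. {Inl i, Inr (f i)} \<notin> B" using w0.B_Inl by blast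
    have BW0: "B \<subseteq> W0" by (rule w0.B_sub)
    have cW: "charP I S I W" unfolding charP_def
    proof (intro conjI)
      show "I \<le> I" by simp
      show "\<forall>p\<in>W. \<exists>a d. p = {Inl a, d} \<and> a \<in> {1..I} \<and> d \<in> devices I S \<and> (\<forall>c. d = Inl c \<longrightarrow> a < c)"
      proof
        fix p assume p: "p \<in> W"
        show "\<exists>a d. p = {Inl a, d} \<and> a \<in> {1..I} \<and> d \<in> devices I S \<and> (\<forall>c. d = Inl c \<longrightarrow> a < c)"
        proof (cases "p \<in> B")
          case True then show ?thesis using charP_pair[OF w0.c] BW0 by blast
        next
          case False
          then obtain i where i: "i \<in> R'" "p = {Inl i, Inr (f i)}" using p Wf unfolding G_def by blast
          then show ?thesis using fS[OF i(1)] R'R RI by (intro exI[where x=i] exI[where x="Inr (f i)"]) auto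
        qed
      qed
      show "\<forall>p\<in>W. \<forall>q\<in>W. p \<inter> q \<noteq> {} \<longrightarrow> p = q"
      proof (intro ballI impI)
        fix p q assume p: "p \<in> W" and q: "q \<in> W" and pq: "p \<inter> q \<noteq> {}"
        then obtain x where x: "x \<in> p" "x \<in> q" by blast
        have BN: False if "p' \<in> B" "i \<in> R'" "x \<in> p'" "x \<in> {Inl i, Inr (f i)}" for p' i
        proof -
          have "x \<in> Inl ` Bi B" using that(1,3) UB by blast
          then show False using that(4) R'B[OF that(2)] by auto
        qed
        show "p = q"
        proof (cases "p \<in> B"; cases "q \<in> B")
          assume "p \<in> B" "q \<in> B" then show "p = q" using w0.dis BW0 x by blast
        next
          assume "p \<in> B" "q \<notin> B"
          then obtain i where "i \<in> R'" "q = {Inl i, Inr (f i)}" using q Wf unfolding G_def by blast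
          then show "p = q" using BN \<open>p \<in> B\<close> x by blast
        next
          assume "p \<notin> B" "q \<in> B"
          then obtain i where "i \<in> R'" "p = {Inl i, Inr (f i)}" using p Wf unfolding G_def by blast
          then show "p = q" using BN \<open>q \<in> B\<close> x by blast
        next
          assume "p \<notin> B" "q \<notin> B"
          then obtain i i' where ii: "i \<in> R'" "p = {Inl i, Inr (f i)}" "i' \<in> R'" "q = {Inl i', Inr (f i')}"
            using p q Wf unfolding G_def by blast
          have "i = i'"
          proof (cases x)
            case (Inl a) then show ?thesis using x ii by auto
          next
            case (Inr b) then have "f i = f i'" using x ii by auto
            then show ?thesis using finj ii inj_onD by metis
          qed
          then show "p = q" using ii by simp
        qed
      qed
      show "\<forall>i\<in>{1..I}. Inl i \<notin> \<Union>W \<longrightarrow>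
          (\<forall>e\<in>devices I S - {Inl i}. \<exists>p\<in>W. e \<in> p \<and> (\<exists>a<i. Inl a \<in> p))"
      proof (intro ballI impI)
        fix i e assume i: "i \<in> {1..I}" and ni: "Inl i \<notin> \<Union>W" and e: "e \<in> devices I S - {Inl i}"
        have "i \<notin> Bi B" using ni UB Wf unfolding G_def by blast
        then have iR: "i \<in> R" using i unfolding R_def RR_def by simp
        have "i \<notin> R'" using ni Wf unfolding G_def by blast
        then have dgi: "dg" "i = Max R" using iR unfolding R'_def by (auto split: if_splits)
        then have yi: "i \<in> Yset I W0" using Y0 by simp
        have R'eq: "R' = R - {i}" using dgi unfolding R'_def by simp
        show "\<exists>p\<in>W. e \<in> p \<and> (\<exists>a<i. Inl a \<in> p)"
        proof (cases e)
          case (Inl c)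
          then have c: "c \<in> {1..I}" "c \<noteq> i" using e by auto
          show ?thesis
          proof (cases "c \<in> Bi B")
            case True
            then obtain q where q: "q \<in> B" "Inl c \<in> q" unfolding Bi_def by blast
            have "\<exists>a<i. Inl a \<in> q" using w0.Y_cases(3)[OF yi q(1)] .
            then show ?thesis using q Inl Wf unfolding G_def by blast
          next
            case False
            then have cR': "c \<in> R'" using c R'eq unfolding R_def RR_def by auto
            have "c < i" using w0.Y_cases(2)[OF yi, of c] cR' R'eq unfolding R_def by simp
            then show ?thesis using cR' Inl Wf unfolding G_def by blast
          qed
        next
          case (Inr k)
          then have k: "k \<in> {1..S}" using e by auto
          have "f ` R' \<subseteq> {1..S}" using fS by blast
          moreover have "card (f ` R') = card {1..S}" using card_image[OF finj] cR' dgi by simp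
          ultimately have "f ` R' = {1..S}" by (simp add: card_subset_eq)
          then obtain c where cR': "c \<in> R'" "k = f c" using k by blast
          have "c < i" using w0.Y_cases(2)[OF yi, of c] cR' R'eq unfolding R_def by simp
          then show ?thesis using cR' Inr Wf unfolding G_def by blast
        qed
      qed
    qed
    have "bb_pairings W = B"
    proof -
      have "\<And>p. p \<in> B \<Longrightarrow> p \<subseteq> range Inl" using w0.B_Inl by blast
      moreover have "\<And>i. \<not> {Inl i, Inr (f i)} \<subseteq> range Inl" by auto
      ultimately show ?thesis unfolding bb_pairings_def Wf G_def by blast
    qed
    moreover have "Inr t \<in> \<Union>W" using ft Wf unfolding G_def by blast
    ultimately show "W \<in> T" using cW possible_iff unfolding T_def by blast
  qed
  have inj: "inj_on G D"
  proof (rule inj_onI)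
    fix f g assume f: "f \<in> D" and g: "g \<in> D" and e: "G f = G g"
    show "f = g"
    proof (rule PiE_ext)
      show "f \<in> R' \<rightarrow>\<^sub>E {1..S}" "g \<in> R' \<rightarrow>\<^sub>E {1..S}" using f g unfolding D_def by auto
      fix i assume i: "i \<in> R'"
      have "{Inl i, Inr (f i)} \<in> G g" using e i unfolding G_def by auto
      moreover have "{Inl i, Inr (f i)} \<notin> B" using w0.B_Inl by blast
      ultimately obtain i' where "i' \<in> R'" "{Inl i, Inr (f i)} = {Inl i', Inr (g i')}" unfolding G_def by blast
      then show "f i = g i" by (auto simp: doubleton_eq_iff)
    qed
  qed
  have "T = G ` D" using sub1 sub2 by blast
  then have "card T = card D" using inj by (simp add: card_image)
  also have "\<dots> = fact (card R') * binom_int (S - 1) (int (card R') - 1)"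
    unfolding D_def by (rule count_inj) (use finR assms(4) R'_def in auto)
  also have "\<dots> = (if dagger I S j then fact S
     else fact (I - 2 * j) * binom_int (S - 1) (int I - 2 * int j - 1))"
  proof (cases dg)
    case True
    have "nat (int S - 1) = S - 1" using assms(1) by simp
    then show ?thesis using True cR' assms(1) unfolding dg_def binom_int_def by simp
  next
    case False
    have "int (I - 2 * j) - 1 = int I - 2 * int j - 1" using cR(2) by simp
    then show ?thesis using False cR' unfolding dg_def by simp
  qed
  finally show ?thesis unfolding T_def .
qed

end
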